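(* Let $n\ge1$, $1\le q,q_1,q_2\le\infty$ and $s,s_1,s_2\in\mathbb{R}$. If $\mathbb{L}(q_1,s_1)\ast\mathbb{L}(q_2,s_2)\subset\mathbb{L}(q,s)$, then $l(q_1,s_1)\ast l(q_2,s_2)\subset l(q,s)$.
   Context: For $1\le p\le\infty$, $s\in\mathbb{R}$: $\mathbb{L}(p,s)$ is the space of measurable $f$ on $\mathbb{R}^n$ with $\|f\|_{\mathbb{L}(p,s)}=\big(\int|f(x)|^p|x|^{ps}dx\big)^{1/p}<\infty$ (ess sup of $|f(x)||x|^s$ if $p=\infty$); $l(p,s)$ is the space of $a:\mathbb{Z}^n\to\mathbb{C}$ with $\|a\|_{l(p,s)}=\big(\sum_k|a(k)|^p\langle k\rangle^{ps}\big)^{1/p}<\infty$ (sup of $|a(k)|\langle k\rangle^s$ if $p=\infty$), $\langle k\rangle=(1+|k|^2)^{1/2}$. Convolutions: $(f\ast g)(x)=\int f(x-y)g(y)dy$ on $\mathbb{R}^n$ and $(a\ast b)(k)=\sum_j a(k-j)b(j)$ on $\mathbb{Z}^n$. "$X\ast Y\subset Z$" means there is $C$ with $f\ast g\in Z$ and $\|f\ast g\|_Z\le C\|f\|_X\|g\|_Y$ for all $f\in X$, $g\in Y$. *)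

theory Defs
  imports "HOL-Analysis.Analysis" "HOL-Probability.Essential_Supremum"
begin

text \<open>Exponents p with 1 \<le> p \<le> \<infinity> are represented as extended reals.
  R^n is real^'n, Z^n is int^'n, for a finite index type 'n (n = CARD('n) \<ge> 1).\<close>

definition Lw_integrand :: "ereal \<Rightarrow> real \<Rightarrow> (real^'n \<Rightarrow> complex) \<Rightarrow> real^'n \<Rightarrow> ennreal" where
  "Lw_integrand p s f x = ennreal (cmod (f x) powr real_of_ereal p * norm x powr (real_of_ereal p * s))"

definition Lw_sup :: "real \<Rightarrow> (real^'n \<Rightarrow> complex) \<Rightarrow> ereal" where
  "Lw_sup s f = esssup lebesgue (\<lambda>x. ereal (cmod (f x) * norm x powr s))"

definition in_Lw :: "ereal \<Rightarrow> real \<Rightarrow> (real^'n \<Rightarrow> complex) \<Rightarrow> bool" where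
  "in_Lw p s f \<longleftrightarrow> f \<in> borel_measurable lebesgue \<and>
     (if p = \<infinity> then Lw_sup s f < \<infinity>
      else (\<integral>\<^sup>+ x. Lw_integrand p s f x \<partial>lebesgue) < \<infinity>)"

definition Lw_norm :: "ereal \<Rightarrow> real \<Rightarrow> (real^'n \<Rightarrow> complex) \<Rightarrow> real" where
  "Lw_norm p s f = (if p = \<infinity> then real_of_ereal (Lw_sup s f)
     else (enn2real (\<integral>\<^sup>+ x. Lw_integrand p s f x \<partial>lebesgue)) powr (1 / real_of_ereal p))"

definition convR :: "(real^'n \<Rightarrow> complex) \<Rightarrow> (real^'n \<Rightarrow> complex) \<Rightarrow> real^'n \<Rightarrow> complex" where
  "convR f g x = (LINT y|lebesgue. f (x - y) * g y)"

definition convR_defined :: "(real^'n \<Rightarrow> complex) \<Rightarrow> (real^'n \<Rightarrow> complex) \<Rightarrow> bool" where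
  "convR_defined f g \<longleftrightarrow> (AE x in lebesgue. integrable lebesgue (\<lambda>y. f (x - y) * g y))"

definition convR_incl :: "'n::finite itself \<Rightarrow> ereal \<Rightarrow> real \<Rightarrow> ereal \<Rightarrow> real \<Rightarrow> ereal \<Rightarrow> real \<Rightarrow> bool" where
  "convR_incl _ p1 s1 p2 s2 p s \<longleftrightarrow> (\<exists>C. \<forall>(f::real^'n \<Rightarrow> complex) g.
     in_Lw p1 s1 f \<longrightarrow> in_Lw p2 s2 g \<longrightarrow>
       convR_defined f g \<and> in_Lw p s (convR f g) \<and>
       Lw_norm p s (convR f g) \<le> C * Lw_norm p1 s1 f * Lw_norm p2 s2 g)"

definition jbr :: "int^'n \<Rightarrow> real" where
  "jbr k = sqrt (1 + (\<Sum>i\<in>UNIV. (real_of_int (k $ i))\<^sup>2))"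

definition lw_term :: "ereal \<Rightarrow> real \<Rightarrow> (int^'n \<Rightarrow> complex) \<Rightarrow> int^'n \<Rightarrow> real" where
  "lw_term p s a k = cmod (a k) powr real_of_ereal p * jbr k powr (real_of_ereal p * s)"

definition lw_sup :: "real \<Rightarrow> (int^'n \<Rightarrow> complex) \<Rightarrow> ereal" where
  "lw_sup s a = (SUP k. ereal (cmod (a k) * jbr k powr s))"

definition in_lw :: "ereal \<Rightarrow> real \<Rightarrow> (int^'n \<Rightarrow> complex) \<Rightarrow> bool" where
  "in_lw p s a \<longleftrightarrow> (if p = \<infinity> then lw_sup s a < \<infinity> else lw_term p s a summable_on UNIV)"

definition lw_norm :: "ereal \<Rightarrow> real \<Rightarrow> (int^'n \<Rightarrow> complex) \<Rightarrow> real" where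
  "lw_norm p s a = (if p = \<infinity> then real_of_ereal (lw_sup s a)
     else (infsum (lw_term p s a) UNIV) powr (1 / real_of_ereal p))"

definition convZ :: "(int^'n \<Rightarrow> complex) \<Rightarrow> (int^'n \<Rightarrow> complex) \<Rightarrow> int^'n \<Rightarrow> complex" where
  "convZ a b k = infsum (\<lambda>j. a (k - j) * b j) UNIV"

definition convZ_defined :: "(int^'n \<Rightarrow> complex) \<Rightarrow> (int^'n \<Rightarrow> complex) \<Rightarrow> bool" where
  "convZ_defined a b \<longleftrightarrow> (\<forall>k. (\<lambda>j. a (k - j) * b j) summable_on UNIV)"

definition convZ_incl :: "'n::finite itself \<Rightarrow> ereal \<Rightarrow> real \<Rightarrow> ereal \<Rightarrow> real \<Rightarrow> ereal \<Rightarrow> real \<Rightarrow> bool" where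
  "convZ_incl _ p1 s1 p2 s2 p s \<longleftrightarrow> (\<exists>C. \<forall>(a::int^'n \<Rightarrow> complex) b.
     in_lw p1 s1 a \<longrightarrow> in_lw p2 s2 b \<longrightarrow>
       convZ_defined a b \<and> in_lw p s (convZ a b) \<and>
       lw_norm p s (convZ a b) \<le> C * lw_norm p1 s1 a * lw_norm p2 s2 b)"

end

theory Submission
  imports Defs
begin


definition vr :: "int^'n \<Rightarrow> real^'n" where "vr k = (\<chi> i. real_of_int (k$i))"
definition cen :: "real \<Rightarrow> int^'n \<Rightarrow> real^'n" where
  "cen w k = 3 *\<^sub>R vr k + w *\<^sub>R axis undefined 1"

lemma vr_add: "vr (k + j) = vr k + vr j" by (simp add: vr_def vec_eq_iff)
lemma vr_diff: "vr (k - j) = vr k - vr j" by (simp add: vr_def vec_eq_iff)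

lemma norm_vr_ge1: assumes "k \<noteq> 0" shows "1 \<le> norm (vr k)"
proof -
  obtain i where "k$i \<noteq> 0" using assms by (auto simp: vec_eq_iff)
  hence "1 \<le> \<bar>real_of_int (k$i)\<bar>" by linarith
  also have "\<dots> = \<bar>vr k $ i\<bar>" by (simp add: vr_def)
  also have "\<dots> \<le> norm (vr k)" by (rule component_le_norm_cart)
  finally show ?thesis .
qed

lemma jbr_eq: "jbr k = sqrt (1 + (norm (vr k))\<^sup>2)"
  by (simp add: jbr_def norm_vec_def L2_set_def vr_def sum_nonneg)

lemma jbr_ge1: "1 \<le> jbr k" by (simp add: jbr_eq)
lemma jbr_pos: "0 < jbr k" using jbr_ge1[of k] by linarith
lemma jbr_ge_norm: "norm (vr k) \<le> jbr k"
  by (simp add: jbr_eq real_le_rsqrt)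
lemma jbr_le: "jbr k \<le> 1 + norm (vr k)"
proof -
  have "1 + (norm (vr k))\<^sup>2 \<le> (1 + norm (vr k))\<^sup>2" by (simp add: power2_eq_square algebra_simps)
  thus ?thesis by (simp add: jbr_eq real_sqrt_le_iff real_le_lsqrt)
qed

lemma cen_close: assumes "dist (cen w k) (cen w k') < 3" shows "k = k'"
proof (rule ccontr)
  assume "k \<noteq> k'"
  hence "1 \<le> norm (vr (k - k'))" by (intro norm_vr_ge1) auto
  moreover have "dist (cen w k) (cen w k') = 3 * norm (vr (k - k'))"
    by (simp add: cen_def dist_norm vr_diff algebra_simps flip: scaleR_diff_right)
  ultimately show False using assms by linarith
qed

lemma cen_sum: "cen 1 k + cen 1 j = cen 2 (k + j)"
  by (simp add: cen_def vr_def axis_def vec_eq_iff)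

lemma cen_weight:
  assumes w: "w = 1 \<or> w = 2" and d: "dist x (cen w k) < 1/2"
  shows "jbr k / 8 \<le> norm x \<and> norm x \<le> 6 * jbr k"
proof -
  let ?i = "undefined :: 'n"
  have ci: "cen w k $ ?i = 3 * real_of_int (k$?i) + w" by (simp add: cen_def vr_def axis_def)
  have a1: "1 \<le> \<bar>3 * real_of_int (k$?i) + w\<bar>"
  proof (cases "k$?i \<ge> 0")
    case True thus ?thesis using w by auto
  next
    case False hence "real_of_int (k$?i) \<le> -1" by simp
    thus ?thesis using w by auto
  qed
  have "norm (x - cen w k) < 1/2" using d by (simp add: dist_norm)
  hence "\<bar>(x - cen w k) $ ?i\<bar> < 1/2" using component_le_norm_cart[of "x - cen w k" ?i] by simp
  hence h1: "1/2 \<le> \<bar>x $ ?i\<bar>" using a1 ci by (simp, smt (verit))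
  have h2: "\<bar>x $ ?i\<bar> \<le> norm x" using component_le_norm_cart[of x ?i] by simp
  have nc: "norm (cen w k) \<le> 3 * norm (vr k) + 2" "3 * norm (vr k) - 2 \<le> norm (cen w k)"
  proof -
    have "norm (w *\<^sub>R axis ?i (1::real)) \<le> 2" using w by auto
    moreover have "norm (3 *\<^sub>R vr k) = 3 * norm (vr k)" by simp
    ultimately show "norm (cen w k) \<le> 3 * norm (vr k) + 2" "3 * norm (vr k) - 2 \<le> norm (cen w k)"
      unfolding cen_def using norm_triangle_ineq[of "3 *\<^sub>R vr k" "w *\<^sub>R axis ?i 1"]
        norm_diff_ineq[of "3 *\<^sub>R vr k" "w *\<^sub>R axis ?i 1"] by auto
  qed
  have "norm x \<le> norm (cen w k) + 1/2" "norm (cen w k) - 1/2 \<le> norm x"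
    using d norm_triangle_ineq2[of x "cen w k"] norm_triangle_ineq3[of x "cen w k"]
    by (auto simp: dist_norm norm_minus_commute)
  thus ?thesis using nc h1 h2 jbr_le[of k] jbr_ge_norm[of k] jbr_ge1[of k] by auto
qed

lemma powr_ratio_bounds:
  fixes \<rho> t :: real assumes "1/48 \<le> \<rho>" "\<rho> \<le> 48"
  shows "48 powr (-\<bar>t\<bar>) \<le> \<rho> powr t \<and> \<rho> powr t \<le> 48 powr \<bar>t\<bar>"
proof -
  have p: "\<rho> > 0" using assms by simp
  have "ln \<rho> \<le> ln 48" using assms by simp
  moreover have "ln (1/48) \<le> ln \<rho>" using assms by (simp del: ln_div)
  moreover have "ln (1/48::real) = - ln 48" by (simp add: ln_div)
  ultimately have l: "\<bar>ln \<rho>\<bar> \<le> ln 48" by auto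
  have "\<bar>t * ln \<rho>\<bar> \<le> \<bar>t\<bar> * ln 48" using l by (simp add: abs_mult mult_left_mono)
  hence "- \<bar>t\<bar> * ln 48 \<le> t * ln \<rho> \<and> t * ln \<rho> \<le> \<bar>t\<bar> * ln 48" by auto
  thus ?thesis using p by (simp add: powr_def)
qed

lemma weight_powr:
  assumes w: "w = 1 \<or> w = 2" and d: "dist x (cen w k) < 1/2"
  shows "48 powr (-\<bar>t\<bar>) * jbr k powr t \<le> norm x powr t \<and> norm x powr t \<le> 48 powr \<bar>t\<bar> * jbr k powr t"
proof -
  define \<rho> where "\<rho> = norm x / jbr k"
  have j: "jbr k > 0" by (rule jbr_pos)
  have "1/48 \<le> \<rho>" "\<rho> \<le> 48" using cen_weight[OF w d] j by (auto simp: \<rho>_def field_simps)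
  note b = powr_ratio_bounds[OF this, of t]
  have "norm x = jbr k * \<rho>" using j by (simp add: \<rho>_def)
  hence "norm x powr t = jbr k powr t * \<rho> powr t" using j \<open>1/48 \<le> \<rho>\<close> by (simp add: powr_mult)
  moreover have "jbr k powr t > 0" using j by simp
  ultimately show ?thesis using b by (auto simp: mult.commute intro: mult_left_mono)
qed



definition bv :: "'n::finite itself \<Rightarrow> real \<Rightarrow> real" where
  "bv _ r = unit_ball_vol (real CARD('n)) * r ^ CARD('n)"

lemma emeasure_lebesgue_ball: "r \<ge> 0 \<Longrightarrow> emeasure lebesgue (ball (c::real^'n::finite) r) = ennreal (bv TYPE('n) r)"
proof -
  have "emeasure lebesgue (ball c r) = emeasure lborel (ball c r)"
    by (simp add: emeasure_completion)
  moreover assume "r \<ge> 0"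
  ultimately show ?thesis by (simp add: emeasure_ball bv_def)
qed

lemma emeasure_lborel_ball': "r \<ge> 0 \<Longrightarrow> emeasure lborel (ball (c::real^'n::finite) r) = ennreal (bv TYPE('n) r)"
  by (simp add: emeasure_ball bv_def)

lemma bv_pos: "r > 0 \<Longrightarrow> bv TYPE('n::finite) r > 0"
  by (simp add: bv_def unit_ball_vol_def)

lemma ball_sets[measurable]: "ball c r \<in> sets lebesgue"
  by simp

lemma ball_unique:
  assumes "x \<in> ball (cen w k) r" "x \<in> ball (cen w k') r" "r \<le> 3/2"
  shows "k = k'"
proof (rule cen_close[of w])
  show "dist (cen w k) (cen w k') < 3"
    using assms dist_triangle[of "cen w k" "cen w k'" x] by (auto simp: dist_commute)
qed

definition bumpf :: "(int^'n::finite \<Rightarrow> complex) \<Rightarrow> (int^'n) set \<Rightarrow> real^'n \<Rightarrow> complex" where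
  "bumpf a F x = (\<Sum>k\<in>F. a k * indicator (ball (cen 1 k) (1/4)) x)"

lemma bump_meas: "bumpf a F \<in> borel_measurable lebesgue"
  unfolding bumpf_def by measurable

lemma bump_in:
  assumes "finite F" "k0 \<in> F" "x \<in> ball (cen 1 k0) (1/4)"
  shows "bumpf a F x = a k0"
proof -
  have "bumpf a F x = a k0 * indicator (ball (cen 1 k0) (1/4)) x
      + (\<Sum>k\<in>F - {k0}. a k * indicator (ball (cen 1 k) (1/4)) x)"
    unfolding bumpf_def by (rule sum.remove[OF assms(1,2)])
  also have "(\<Sum>k\<in>F - {k0}. a k * indicator (ball (cen 1 k) (1/4)) x) = 0"
  proof (rule sum.neutral, rule ballI)
    fix k assume "k \<in> F - {k0}"
    hence "x \<notin> ball (cen 1 k) (1/4)" using ball_unique[of x 1 k0 "1/4" k] assms(3) by auto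
    thus "a k * indicator (ball (cen 1 k) (1/4)) x = 0" by simp
  qed
  finally show ?thesis using assms(3) by simp
qed

lemma bump_out:
  assumes "\<forall>k\<in>F. x \<notin> ball (cen 1 k) (1/4)"
  shows "bumpf a F x = 0"
  unfolding bumpf_def using assms by (intro sum.neutral) auto

lemma lw_term_nonneg: "0 \<le> lw_term p t a k"
  by (simp add: lw_term_def)

lemma upper_fin:
  fixes a :: "int^'n::finite \<Rightarrow> complex"
  assumes F: "finite F" and p: "1 \<le> p" "p \<noteq> \<infinity>"
  defines "pr \<equiv> real_of_ereal p"
  shows "in_Lw p t (bumpf a F) \<and>
    Lw_norm p t (bumpf a F) \<le> (48 powr \<bar>pr * t\<bar> * bv TYPE('n) (1/4)) powr (1/pr)
        * (\<Sum>k\<in>F. lw_term p t a k) powr (1/pr)"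
proof -
  define K where "K = 48 powr \<bar>pr * t\<bar>"
  define V where "V = bv TYPE('n) (1/4)"
  have Kpos: "K > 0" by (simp add: K_def)
  have Vpos: "V > 0" by (simp add: V_def bv_pos)
  have pw: "Lw_integrand p t (bumpf a F) x \<le>
      (\<Sum>k\<in>F. ennreal (K * lw_term p t a k) * indicator (ball (cen 1 k) (1/4)) x)" for x
  proof (cases "\<exists>k\<in>F. x \<in> ball (cen 1 k) (1/4)")
    case True
    then obtain k0 where k0: "k0 \<in> F" "x \<in> ball (cen 1 k0) (1/4)" by blast
    have d: "dist x (cen 1 k0) < 1/2" using k0 by (simp add: dist_commute)
    have "norm x powr (pr * t) \<le> K * jbr k0 powr (pr * t)"
      using weight_powr[of 1 x k0 "pr * t"] d by (simp add: K_def)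
    hence "cmod (a k0) powr pr * norm x powr (pr * t) \<le> cmod (a k0) powr pr * (K * jbr k0 powr (pr * t))"
      by (intro mult_left_mono) auto
    note ineq = this
    have e1: "Lw_integrand p t (bumpf a F) x = ennreal (cmod (a k0) powr pr * norm x powr (pr * t))"
      by (simp add: Lw_integrand_def bump_in[OF F k0] pr_def)
    have e2: "K * lw_term p t a k0 = cmod (a k0) powr pr * (K * jbr k0 powr (pr * t))"
      by (simp add: lw_term_def pr_def mult.left_commute)
    have e3: "indicator (ball (cen 1 k0) (1/4)) x = (1::ennreal)" using k0 by simp
    have "Lw_integrand p t (bumpf a F) x \<le> ennreal (K * lw_term p t a k0) * indicator (ball (cen 1 k0) (1/4)) x"
      unfolding e1 e2 e3 using ineq by (simp add: ennreal_leI)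
    also have "\<dots> \<le> (\<Sum>k\<in>F. ennreal (K * lw_term p t a k) * indicator (ball (cen 1 k) (1/4)) x)"
      by (rule member_le_sum) (use k0 F in auto)
    finally show ?thesis .
  next
    case False
    hence "bumpf a F x = 0" by (intro bump_out) auto
    moreover have "real_of_ereal p > 0" using p by (cases p) auto
    ultimately show ?thesis by (simp add: Lw_integrand_def)
  qed
  have "(\<integral>\<^sup>+ x. Lw_integrand p t (bumpf a F) x \<partial>lebesgue) \<le>
      (\<integral>\<^sup>+ x. (\<Sum>k\<in>F. ennreal (K * lw_term p t a k) * indicator (ball (cen 1 k) (1/4)) x) \<partial>lebesgue)"
    by (intro nn_integral_mono pw)
  also have "\<dots> = (\<Sum>k\<in>F. \<integral>\<^sup>+ x. ennreal (K * lw_term p t a k) * indicator (ball (cen 1 k) (1/4)) x \<partial>lebesgue)"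
    by (rule nn_integral_sum) measurable
  also have "\<dots> = (\<Sum>k\<in>F. ennreal (K * lw_term p t a k) * ennreal V)"
    by (simp add: nn_integral_cmult_indicator emeasure_lborel_ball' V_def)
  also have "\<dots> = (\<Sum>k\<in>F. ennreal (K * V * lw_term p t a k))"
  proof (intro sum.cong refl)
    fix k
    have "ennreal (K * lw_term p t a k) * ennreal V = ennreal (K * lw_term p t a k * V)"
      using Kpos Vpos lw_term_nonneg[of p t a k] by (simp add: ennreal_mult)
    thus "ennreal (K * lw_term p t a k) * ennreal V = ennreal (K * V * lw_term p t a k)"
      by (simp add: mult_ac)
  qed
  also have "\<dots> = ennreal (\<Sum>k\<in>F. K * V * lw_term p t a k)"
    by (rule sum_ennreal) (use Kpos Vpos lw_term_nonneg in \<open>auto intro!: mult_nonneg_nonneg\<close>)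
  also have "\<dots> = ennreal (K * V * (\<Sum>k\<in>F. lw_term p t a k))"
    by (simp add: sum_distrib_left)
  finally have I: "(\<integral>\<^sup>+ x. Lw_integrand p t (bumpf a F) x \<partial>lebesgue) \<le> ennreal (K * V * (\<Sum>k\<in>F. lw_term p t a k))" .
  hence fin: "(\<integral>\<^sup>+ x. Lw_integrand p t (bumpf a F) x \<partial>lebesgue) < \<infinity>"
    using le_less_trans by fastforce
  have S0: "0 \<le> (\<Sum>k\<in>F. lw_term p t a k)" by (simp add: sum_nonneg lw_term_nonneg)
  have e: "enn2real (\<integral>\<^sup>+ x. Lw_integrand p t (bumpf a F) x \<partial>lebesgue) \<le> K * V * (\<Sum>k\<in>F. lw_term p t a k)"
    using enn2real_mono[OF I] Kpos Vpos S0 by simp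
  have "pr > 0" using p by (cases p) (auto simp: pr_def)
  have "Lw_norm p t (bumpf a F) \<le> (K * V * (\<Sum>k\<in>F. lw_term p t a k)) powr (1/pr)"
    unfolding Lw_norm_def using p e \<open>pr > 0\<close> by (simp add: pr_def powr_mono2)
  also have "\<dots> = (K * V) powr (1/pr) * (\<Sum>k\<in>F. lw_term p t a k) powr (1/pr)"
    using Kpos Vpos S0 by (simp add: powr_mult)
  finally have nb: "Lw_norm p t (bumpf a F) \<le> (K * V) powr (1/pr) * (\<Sum>k\<in>F. lw_term p t a k) powr (1/pr)" .
  have il: "in_Lw p t (bumpf a F)" unfolding in_Lw_def using fin p bump_meas by auto
  show ?thesis using il nb by (simp only: K_def V_def)
qed

lemma esssup_lower:
  fixes f :: "'a \<Rightarrow> ereal"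
  assumes f: "f \<in> borel_measurable M" and D: "D \<in> sets M" "emeasure M D > 0"
    and ge: "\<And>x. x \<in> D \<Longrightarrow> c \<le> f x"
  shows "c \<le> esssup M f"
proof (rule ccontr)
  assume "\<not> c \<le> esssup M f"
  hence lt: "esssup M f < c" by simp
  have ae: "AE x in M. x \<notin> D"
    using esssup_AE[of f M]
  proof (rule eventually_mono)
    fix x assume "f x \<le> esssup M f"
    thus "x \<notin> D" using ge[of x] lt by (metis leD order.strict_trans1)
  qed
  have eq: "{x \<in> space M. \<not> x \<notin> D} = D" using sets.sets_into_space[OF D(1)] by auto
  have "emeasure M D = 0" using AE_iff_measurable[OF D(1) eq] ae by simp
  thus False using D(2) by simp
qed

lemma upper_inf:
  assumes F: "finite F" and B: "0 \<le> B" and bnd: "\<And>k. k \<in> F \<Longrightarrow> cmod (a k) * jbr k powr t \<le> B"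
  shows "in_Lw \<infinity> t (bumpf a F) \<and> 0 \<le> Lw_norm \<infinity> t (bumpf a F)
     \<and> Lw_norm \<infinity> t (bumpf a F) \<le> 48 powr \<bar>t\<bar> * B"
proof -
  have pw: "cmod (bumpf a F x) * norm x powr t \<le> 48 powr \<bar>t\<bar> * B" for x
  proof (cases "\<exists>k\<in>F. x \<in> ball (cen 1 k) (1/4)")
    case True
    then obtain k0 where k0: "k0 \<in> F" "x \<in> ball (cen 1 k0) (1/4)" by blast
    have d: "dist x (cen 1 k0) < 1/2" using k0 by (simp add: dist_commute)
    have "norm x powr t \<le> 48 powr \<bar>t\<bar> * jbr k0 powr t"
      using weight_powr[of 1 x k0 t] d by simp
    hence "cmod (a k0) * norm x powr t \<le> cmod (a k0) * (48 powr \<bar>t\<bar> * jbr k0 powr t)"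
      by (intro mult_left_mono) auto
    also have "\<dots> = 48 powr \<bar>t\<bar> * (cmod (a k0) * jbr k0 powr t)" by simp
    also have "\<dots> \<le> 48 powr \<bar>t\<bar> * B" using bnd[OF k0(1)] by (intro mult_left_mono) auto
    finally show ?thesis using bump_in[OF F k0] by simp
  next
    case False
    hence "bumpf a F x = 0" by (intro bump_out) auto
    thus ?thesis using B by simp
  qed
  have idm: "(\<lambda>x::real^'n. x) \<in> borel_measurable lebesgue"
    using measurable_completion[of "\<lambda>x. x" lborel borel] by simp
  have m: "(\<lambda>x. ereal (cmod (bumpf a F x) * norm x powr t)) \<in> borel_measurable lebesgue"
    using bump_meas[of a F] idm by measurable
  have up: "Lw_sup t (bumpf a F) \<le> ereal (48 powr \<bar>t\<bar> * B)"
    unfolding Lw_sup_def by (intro esssup_I m AE_I2) (use pw in simp)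
  have lo: "0 \<le> Lw_sup t (bumpf a F)"
    unfolding Lw_sup_def
    by (rule esssup_lower[OF m, of "ball 0 1", simplified zero_ereal_def])
       (auto simp: emeasure_lborel_ball' bv_pos)
  show ?thesis using up lo bump_meas[of a F] unfolding in_Lw_def Lw_norm_def
    by (cases "Lw_sup t (bumpf a F)") auto
qed



definition psi :: "real^'n::finite \<Rightarrow> real" where
  "psi u = measure lebesgue (ball 0 (1/4) \<inter> ball u (1/4))"

lemma measure_lebesgue_ball: "r \<ge> 0 \<Longrightarrow> measure lebesgue (ball (c::real^'n::finite) r) = bv TYPE('n) r"
proof -
  assume r: "r \<ge> 0"
  have "0 \<le> bv TYPE('n) r" using r by (simp add: bv_def)
  thus ?thesis using emeasure_lebesgue_ball[OF r, of c] by (simp add: measure_def)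
qed

lemma psi_zero: assumes "1/2 \<le> norm u" shows "psi u = 0"
proof -
  have "ball 0 (1/4) \<inter> ball u (1/4) = {}"
  proof (rule ccontr)
    assume "ball 0 (1/4) \<inter> ball u (1/4) \<noteq> {}"
    then obtain z where "norm z < 1/4" "dist u z < 1/4" by auto
    hence "norm u < 1/2" using norm_triangle_ineq[of "u - z" z]
      by (auto simp: dist_norm)
    thus False using assms by simp
  qed
  thus ?thesis by (simp add: psi_def)
qed

lemma psi_ge: assumes "norm (u::real^'n::finite) < 1/8" shows "bv TYPE('n) (1/8) \<le> psi u"
proof -
  have "ball 0 (1/8) \<subseteq> ball 0 (1/4) \<inter> ball u (1/4)"
  proof
    fix z assume "z \<in> (ball 0 (1/8) :: (real^'n) set)"
    hence "norm z < 1/8" by simp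
    moreover have "dist u z \<le> norm u + norm z" by (simp add: dist_norm norm_triangle_ineq4)
    ultimately show "z \<in> ball 0 (1/4) \<inter> ball u (1/4)" using assms by auto
  qed
  hence "measure lebesgue (ball (0::real^'n) (1/8)) \<le> psi u"
    unfolding psi_def
    by (intro measure_mono_fmeasurable) (auto intro!: lmeasurable_open bounded_Int)
  thus ?thesis using measure_lebesgue_ball[of "1/8" "0::real^'n"] by simp
qed

lemma indicator_ball_shift:
  fixes x c y :: "real^'n::finite"
  shows "indicator (ball c r) (x - y) = (indicator (ball (x - c) r) y :: real)"
proof -
  have "c - (x - y) = - ((x - c) - y)" by (simp add: algebra_simps)
  hence "dist c (x - y) = dist (x - c) y" unfolding dist_norm by (metis norm_minus_cancel)
  thus ?thesis by (simp add: indicator_def)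
qed

lemma conv_eq:
  fixes a b :: "int^'n::finite \<Rightarrow> complex"
  assumes F: "finite F" and G: "finite G"
  shows "convR (bumpf a F) (bumpf b G) x =
     (\<Sum>k\<in>F. \<Sum>j\<in>G. a k * b j * complex_of_real (psi (x - cen 2 (k + j))))"
proof -
  define S where "S k j = ball (x - cen 1 k) (1/4) \<inter> ball (cen 1 j) (1/4)" for k j
  have ptw: "bumpf a F (x - y) * bumpf b G y =
      (\<Sum>k\<in>F. \<Sum>j\<in>G. a k * b j * complex_of_real (indicator (S k j) y))" for y
  proof -
    have "bumpf a F (x - y) * bumpf b G y =
      (\<Sum>k\<in>F. \<Sum>j\<in>G. (a k * indicator (ball (cen 1 k) (1/4)) (x - y)) * (b j * indicator (ball (cen 1 j) (1/4)) y))"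
      unfolding bumpf_def by (rule sum_product)
    also have "\<dots> = (\<Sum>k\<in>F. \<Sum>j\<in>G. a k * b j * complex_of_real (indicator (S k j) y))"
    proof (intro sum.cong refl)
      fix k j
      have "(indicator (ball (cen 1 k) (1/4)) (x - y) :: complex) = complex_of_real (indicator (ball (x - cen 1 k) (1/4)) y)"
        by (subst indicator_ball_shift[symmetric]) (simp add: indicator_def)
      moreover have "(indicator (ball (cen 1 j) (1/4)) y :: complex) = complex_of_real (indicator (ball (cen 1 j) (1/4)) y)"
        by (simp add: indicator_def)
      moreover have "(indicator (S k j) y :: real) = indicator (ball (x - cen 1 k) (1/4)) y * indicator (ball (cen 1 j) (1/4)) y"
        by (simp add: S_def indicator_inter_arith)
      ultimately show "a k * indicator (ball (cen 1 k) (1/4)) (x - y) * (b j * indicator (ball (cen 1 j) (1/4)) y)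
          = a k * b j * complex_of_real (indicator (S k j) y)"
        by (simp add: mult_ac)
    qed
    finally show ?thesis .
  qed
  have Sfin: "S k j \<in> sets lebesgue" "emeasure lebesgue (S k j) < \<infinity>" for k j
  proof -
    have "S k j \<in> lmeasurable" unfolding S_def by (intro lmeasurable_open bounded_Int) auto
    thus "S k j \<in> sets lebesgue" "emeasure lebesgue (S k j) < \<infinity>" by (auto simp: fmeasurable_def)
  qed
  have int: "integrable lebesgue (\<lambda>y. a k * b j * complex_of_real (indicator (S k j) y))" for k j
    using Sfin[of k j] by (intro integrable_mult_right) (simp add: complex_of_real_integrable_eq)
  have mS: "measure lebesgue (S k j) = psi (x - cen 2 (k + j))" for k j
  proof -
    have "S k j = (+) (cen 1 j) ` (ball 0 (1/4) \<inter> ball (x - cen 2 (k + j)) (1/4))"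
      unfolding S_def translation_Int image_add_ball
      by (simp add: cen_sum[symmetric] algebra_simps Int_commute)
    thus ?thesis by (simp add: measure_translation psi_def)
  qed
  have "convR (bumpf a F) (bumpf b G) x =
      (LINT y|lebesgue. (\<Sum>k\<in>F. \<Sum>j\<in>G. a k * b j * complex_of_real (indicator (S k j) y)))"
    unfolding convR_def ptw ..
  also have "\<dots> = (\<Sum>k\<in>F. LINT y|lebesgue. (\<Sum>j\<in>G. a k * b j * complex_of_real (indicator (S k j) y)))"
    by (rule Bochner_Integration.integral_sum[where f="\<lambda>k y. \<Sum>j\<in>G. a k * b j * complex_of_real (indicator (S k j) y)"])
       (rule Bochner_Integration.integrable_sum, rule int)
  also have "\<dots> = (\<Sum>k\<in>F. \<Sum>j\<in>G. LINT y|lebesgue. a k * b j * complex_of_real (indicator (S k j) y))"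
  proof (intro sum.cong refl)
    fix k show "(LINT y|lebesgue. (\<Sum>j\<in>G. a k * b j * complex_of_real (indicator (S k j) y))) =
      (\<Sum>j\<in>G. LINT y|lebesgue. a k * b j * complex_of_real (indicator (S k j) y))"
      by (rule Bochner_Integration.integral_sum[where f="\<lambda>j y. a k * b j * complex_of_real (indicator (S k j) y)"]) (rule int)
  qed
  also have "\<dots> = (\<Sum>k\<in>F. \<Sum>j\<in>G. a k * b j * complex_of_real (psi (x - cen 2 (k + j))))"
    using Sfin by (intro sum.cong refl) (simp add: mS)
  finally show ?thesis .
qed

definition cZ :: "(int^'n::finite \<Rightarrow> complex) \<Rightarrow> (int^'n \<Rightarrow> complex) \<Rightarrow> (int^'n) set \<Rightarrow> (int^'n) set \<Rightarrow> int^'n \<Rightarrow> complex" where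
  "cZ a b F G m = (\<Sum>k\<in>F. \<Sum>j\<in>G. if k + j = m then a k * b j else 0)"

lemma conv_on_D:
  fixes a b :: "int^'n::finite \<Rightarrow> complex"
  assumes F: "finite F" and G: "finite G" and x: "dist x (cen 2 m) < 1/8"
  shows "convR (bumpf a F) (bumpf b G) x = cZ a b F G m * complex_of_real (psi (x - cen 2 m))"
proof -
  have "convR (bumpf a F) (bumpf b G) x =
     (\<Sum>k\<in>F. \<Sum>j\<in>G. (if k + j = m then a k * b j else 0) * complex_of_real (psi (x - cen 2 m)))"
    unfolding conv_eq[OF F G]
  proof (intro sum.cong refl)
    fix k j
    show "a k * b j * complex_of_real (psi (x - cen 2 (k + j))) =
        (if k + j = m then a k * b j else 0) * complex_of_real (psi (x - cen 2 m))"
    proof (cases "k + j = m")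
      case False
      have "1/2 \<le> norm (x - cen 2 (k + j))"
      proof (rule ccontr)
        assume "\<not> ?thesis"
        hence "dist (cen 2 m) (cen 2 (k + j)) < 3"
          using x dist_triangle[of "cen 2 m" "cen 2 (k+j)" x]
          by (auto simp: dist_norm norm_minus_commute)
        thus False using cen_close False by blast
      qed
      thus ?thesis using False by (simp add: psi_zero)
    qed simp
  qed
  also have "\<dots> = cZ a b F G m * complex_of_real (psi (x - cen 2 m))"
    by (simp add: cZ_def sum_distrib_right)
  finally show ?thesis .
qed

lemma cZ_convZ:
  fixes a b :: "int^'n::finite \<Rightarrow> complex"
  assumes F: "finite F" and G: "finite G" and a0: "\<And>k. k \<notin> F \<Longrightarrow> a k = 0"
    and b0: "\<And>k. k \<notin> G \<Longrightarrow> b k = 0"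
  shows "convZ a b m = cZ a b F G m" "convZ a b m = (\<Sum>j\<in>G. a (m - j) * b j)"
proof -
  have "convZ a b m = infsum (\<lambda>j. a (m - j) * b j) G"
    unfolding convZ_def by (rule infsum_cong_neutral) (use b0 in auto)
  also have "\<dots> = (\<Sum>j\<in>G. a (m - j) * b j)" using G by simp
  finally show 2: "convZ a b m = (\<Sum>j\<in>G. a (m - j) * b j)" .
  have "cZ a b F G m = (\<Sum>j\<in>G. \<Sum>k\<in>F. if k = m - j then a k * b j else 0)"
    unfolding cZ_def by (subst sum.swap) (intro sum.cong refl, auto simp: algebra_simps)
  also have "\<dots> = (\<Sum>j\<in>G. a (m - j) * b j)"
    using F a0 by (intro sum.cong refl) (auto simp: sum.delta')
  finally show "convZ a b m = cZ a b F G m" using 2 by simp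
qed



lemma sum_ind_le:
  fixes g :: "'m \<Rightarrow> ennreal"
  assumes M: "finite M" and uniq: "\<And>m m'. m \<in> M \<Longrightarrow> m' \<in> M \<Longrightarrow> x \<in> D m \<Longrightarrow> x \<in> D m' \<Longrightarrow> m = m'"
    and le: "\<And>m. m \<in> M \<Longrightarrow> x \<in> D m \<Longrightarrow> g m \<le> h"
  shows "(\<Sum>m\<in>M. g m * indicator (D m) x) \<le> h"
proof (cases "\<exists>m0\<in>M. x \<in> D m0")
  case True
  then obtain m0 where m0: "m0 \<in> M" "x \<in> D m0" by blast
  have "(\<Sum>m\<in>M. g m * indicator (D m) x) = g m0 * indicator (D m0) x + (\<Sum>m\<in>M - {m0}. g m * indicator (D m) x)"
    by (rule sum.remove[OF M m0(1)])
  also have "(\<Sum>m\<in>M - {m0}. g m * indicator (D m) x) = 0"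
  proof (rule sum.neutral, rule ballI)
    fix m assume "m \<in> M - {m0}"
    hence "x \<notin> D m" using uniq[of m m0] m0 by auto
    thus "g m * indicator (D m) x = 0" by simp
  qed
  finally show ?thesis using m0 le[OF m0] by simp
next
  case False
  hence "(\<Sum>m\<in>M. g m * indicator (D m) x) = 0" by (intro sum.neutral) auto
  thus ?thesis by simp
qed

lemma idm_leb: "(\<lambda>x::real^'n::finite. x) \<in> borel_measurable lebesgue"
  using measurable_completion[of "\<lambda>x. x" lborel borel] by simp

lemma convZ_zero_outside:
  fixes a b :: "int^'n::finite \<Rightarrow> complex"
  assumes F: "finite F" "finite G" and a0: "\<And>k. k \<notin> F \<Longrightarrow> a k = 0"
    and b0: "\<And>k. k \<notin> G \<Longrightarrow> b k = 0"
    and m: "m \<notin> (\<lambda>(k,j). k + j) ` (F \<times> G)"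
  shows "convZ a b m = 0"
proof -
  have "convZ a b m = cZ a b F G m" by (rule cZ_convZ(1)[OF F a0 b0])
  also have "\<dots> = 0" unfolding cZ_def using m
    by (intro sum.neutral ballI) (auto intro!: sum.neutral)
  finally show ?thesis .
qed

lemma H_lower_pt:
  fixes a b :: "int^'n::finite \<Rightarrow> complex"
  assumes F: "finite F" "finite G" and a0: "\<And>k. k \<notin> F \<Longrightarrow> a k = 0"
    and b0: "\<And>k. k \<notin> G \<Longrightarrow> b k = 0"
    and x: "x \<in> ball (cen 2 m) (1/8)"
  shows "cmod (convZ a b m) * bv TYPE('n) (1/8) \<le> cmod (convR (bumpf a F) (bumpf b G) x)"
proof -
  have d: "dist x (cen 2 m) < 1/8" using x by (simp add: dist_commute)
  have "norm (x - cen 2 m) < 1/8" using d by (simp add: dist_norm)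
  hence p: "bv TYPE('n) (1/8) \<le> psi (x - cen 2 m)" by (rule psi_ge)
  have "convR (bumpf a F) (bumpf b G) x = convZ a b m * complex_of_real (psi (x - cen 2 m))"
    using conv_on_D[OF F d] cZ_convZ(1)[OF F a0 b0] by simp
  moreover have "0 \<le> psi (x - cen 2 m)" by (simp add: psi_def)
  ultimately show ?thesis using p by (simp add: norm_mult mult_left_mono)
qed

lemma lower_fin:
  fixes a b :: "int^'n::finite \<Rightarrow> complex"
  assumes F: "finite F" "finite G" and a0: "\<And>k. k \<notin> F \<Longrightarrow> a k = 0"
    and b0: "\<And>k. k \<notin> G \<Longrightarrow> b k = 0"
    and q: "1 \<le> q" "q \<noteq> \<infinity>" and inL: "in_Lw q s (convR (bumpf a F) (bumpf b G))"
  defines "qr \<equiv> real_of_ereal q"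
  defines "L \<equiv> bv TYPE('n) (1/8) powr qr * 48 powr (-\<bar>qr * s\<bar>) * bv TYPE('n) (1/8)"
  shows "lw_norm q s (convZ a b) \<le> (1/L) powr (1/qr) * Lw_norm q s (convR (bumpf a F) (bumpf b G))"
proof -
  define H where "H = convR (bumpf a F) (bumpf b G)"
  define c where "c = convZ a b"
  define M where "M = (\<lambda>(k,j). k + j) ` (F \<times> G)"
  define V8 where "V8 = bv TYPE('n) (1/8)"
  define L' where "L' = V8 powr qr * 48 powr (-\<bar>qr * s\<bar>)"
  have V8: "V8 > 0" by (simp add: V8_def bv_pos)
  have L': "L' > 0" using V8 by (simp add: L'_def)
  have LL: "L = L' * V8" by (simp add: L_def L'_def V8_def)
  have Lpos: "L > 0" using LL L' V8 by simp
  have qr: "qr \<ge> 1" using q by (cases q) (auto simp: qr_def)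
  have Mfin: "finite M" using F by (simp add: M_def)
  have c0: "m \<notin> M \<Longrightarrow> c m = 0" for m
    unfolding c_def M_def by (rule convZ_zero_outside[OF F a0 b0])
  define I where "I = (\<integral>\<^sup>+ x. Lw_integrand q s H x \<partial>lebesgue)"
  have Ifin: "I < \<infinity>" using inL q by (simp add: in_Lw_def I_def H_def)
  have pw: "(\<Sum>m\<in>M. ennreal (L' * lw_term q s c m) * indicator (ball (cen 2 m) (1/8)) x) \<le> Lw_integrand q s H x" for x
  proof (rule sum_ind_le[OF Mfin])
    fix m m' assume "x \<in> ball (cen 2 m) (1/8)" "x \<in> ball (cen 2 m') (1/8)"
    thus "m = m'" by (rule ball_unique) simp
  next
    fix m assume m: "m \<in> M" "x \<in> ball (cen 2 m) (1/8)"
    have h1: "cmod (c m) * V8 \<le> cmod (H x)"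
      using H_lower_pt[OF F a0 b0 m(2)] by (simp add: c_def H_def V8_def)
    have "(cmod (c m) * V8) powr qr \<le> cmod (H x) powr qr"
      using h1 qr V8 by (intro powr_mono2) auto
    hence h2: "cmod (c m) powr qr * V8 powr qr \<le> cmod (H x) powr qr"
      using V8 by (simp add: powr_mult)
    have d: "dist x (cen 2 m) < 1/2" using m(2) by (simp add: dist_commute)
    have h3: "48 powr (-\<bar>qr * s\<bar>) * jbr m powr (qr * s) \<le> norm x powr (qr * s)"
      using weight_powr[of 2 x m "qr * s"] d by simp
    have "(cmod (c m) powr qr * V8 powr qr) * (48 powr (-\<bar>qr * s\<bar>) * jbr m powr (qr * s))
        \<le> cmod (H x) powr qr * norm x powr (qr * s)"
      by (rule mult_mono[OF h2 h3]) auto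
    moreover have "L' * lw_term q s c m = (cmod (c m) powr qr * V8 powr qr) * (48 powr (-\<bar>qr * s\<bar>) * jbr m powr (qr * s))"
      by (simp add: L'_def lw_term_def qr_def mult_ac)
    ultimately show "ennreal (L' * lw_term q s c m) \<le> Lw_integrand q s H x"
      by (simp add: Lw_integrand_def qr_def ennreal_leI)
  qed
  have "(\<Sum>m\<in>M. ennreal (L' * lw_term q s c m) * ennreal V8) =
      (\<integral>\<^sup>+ x. (\<Sum>m\<in>M. ennreal (L' * lw_term q s c m) * indicator (ball (cen 2 m) (1/8)) x) \<partial>lebesgue)"
    by (subst nn_integral_sum) (auto simp: nn_integral_cmult_indicator emeasure_lborel_ball' V8_def)
  also have "\<dots> \<le> I" unfolding I_def by (intro nn_integral_mono pw)
  finally have s1: "(\<Sum>m\<in>M. ennreal (L' * lw_term q s c m) * ennreal V8) \<le> I" .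
  have "(\<Sum>m\<in>M. ennreal (L' * lw_term q s c m) * ennreal V8) = (\<Sum>m\<in>M. ennreal (L * lw_term q s c m))"
  proof (intro sum.cong refl)
    fix m
    show "ennreal (L' * lw_term q s c m) * ennreal V8 = ennreal (L * lw_term q s c m)"
      using L' V8 lw_term_nonneg[of q s c m] by (simp add: ennreal_mult[symmetric] LL mult_ac)
  qed
  also have "\<dots> = ennreal (\<Sum>m\<in>M. L * lw_term q s c m)"
    by (rule sum_ennreal) (use Lpos lw_term_nonneg in \<open>auto intro!: mult_nonneg_nonneg\<close>)
  finally have s2: "ennreal (L * (\<Sum>m\<in>M. lw_term q s c m)) \<le> I" using s1 by (simp add: sum_distrib_left)
  have S0: "0 \<le> (\<Sum>m\<in>M. lw_term q s c m)" by (simp add: sum_nonneg lw_term_nonneg)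
  have s3: "L * (\<Sum>m\<in>M. lw_term q s c m) \<le> enn2real I"
    using enn2real_mono[OF s2] Ifin Lpos S0 by simp
  have inf: "infsum (lw_term q s c) UNIV = (\<Sum>m\<in>M. lw_term q s c m)"
  proof -
    have "infsum (lw_term q s c) UNIV = infsum (lw_term q s c) M"
      by (rule infsum_cong_neutral) (use c0 qr in \<open>auto simp: lw_term_def qr_def\<close>)
    thus ?thesis using Mfin by simp
  qed
  have "lw_norm q s c = (\<Sum>m\<in>M. lw_term q s c m) powr (1/qr)"
    using q by (simp add: lw_norm_def inf qr_def)
  also have "\<dots> \<le> (enn2real I / L) powr (1/qr)"
    using s3 Lpos S0 qr by (intro powr_mono2) (auto simp: field_simps)
  also have "\<dots> = (1/L) powr (1/qr) * enn2real I powr (1/qr)"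
    using Lpos by (simp add: powr_mult[symmetric] divide_inverse mult.commute)
  also have "enn2real I powr (1/qr) = Lw_norm q s H"
    using q by (simp add: Lw_norm_def I_def qr_def)
  finally show ?thesis by (simp add: c_def H_def)
qed

lemma lower_inf:
  fixes a b :: "int^'n::finite \<Rightarrow> complex"
  assumes F: "finite F" "finite G" and a0: "\<And>k. k \<notin> F \<Longrightarrow> a k = 0"
    and b0: "\<And>k. k \<notin> G \<Longrightarrow> b k = 0"
    and inL: "in_Lw \<infinity> s (convR (bumpf a F) (bumpf b G))"
  shows "lw_norm \<infinity> s (convZ a b) \<le> 48 powr \<bar>s\<bar> / bv TYPE('n) (1/8) * Lw_norm \<infinity> s (convR (bumpf a F) (bumpf b G))"
proof -
  define H where "H = convR (bumpf a F) (bumpf b G)"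
  define c where "c = convZ a b"
  define M where "M = (\<lambda>(k,j). k + j) ` (F \<times> G)"
  define V8 where "V8 = bv TYPE('n) (1/8)"
  define g where "g x = ereal (cmod (H x) * norm x powr s)" for x
  have V8: "V8 > 0" by (simp add: V8_def bv_pos)
  have c0: "m \<notin> M \<Longrightarrow> c m = 0" for m
    unfolding c_def M_def by (rule convZ_zero_outside[OF F a0 b0])
  have Hm: "H \<in> borel_measurable lebesgue" using inL by (simp add: in_Lw_def H_def)
  have gm: "g \<in> borel_measurable lebesgue" unfolding g_def using Hm idm_leb by measurable
  have Efin: "Lw_sup s H < \<infinity>" using inL by (simp add: in_Lw_def H_def)
  have E0: "0 \<le> Lw_sup s H"
    unfolding Lw_sup_def
    by (rule esssup_lower[OF gm[unfolded g_def], of "ball 0 1", simplified zero_ereal_def])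
       (auto simp: emeasure_lborel_ball' bv_pos)
  obtain e where e: "Lw_sup s H = ereal e" "0 \<le> e" using Efin E0 by (cases "Lw_sup s H") auto
  have bnd: "cmod (c m) * jbr m powr s \<le> 48 powr \<bar>s\<bar> / V8 * e" for m
  proof (cases "m \<in> M")
    case False thus ?thesis using c0 e V8 by simp
  next
    case True
    have "ereal (cmod (c m) * V8 * (48 powr (-\<bar>s\<bar>) * jbr m powr s)) \<le> Lw_sup s H"
      unfolding Lw_sup_def
    proof (rule esssup_lower[OF gm[unfolded g_def], of "ball (cen 2 m) (1/8)"])
      show "0 < emeasure lebesgue (ball (cen 2 m) (1/8))" by (simp add: emeasure_lborel_ball' bv_pos)
    next
      fix x assume x: "x \<in> ball (cen 2 m) (1/8)"
      have h1: "cmod (c m) * V8 \<le> cmod (H x)"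
        using H_lower_pt[OF F a0 b0 x] by (simp add: c_def H_def V8_def)
      have d: "dist x (cen 2 m) < 1/2" using x by (simp add: dist_commute)
      have h3: "48 powr (-\<bar>s\<bar>) * jbr m powr s \<le> norm x powr s"
        using weight_powr[of 2 x m s] d by simp
      have "cmod (c m) * V8 * (48 powr (-\<bar>s\<bar>) * jbr m powr s) \<le> cmod (H x) * norm x powr s"
        by (rule mult_mono[OF h1 h3]) auto
      thus "ereal (cmod (c m) * V8 * (48 powr (-\<bar>s\<bar>) * jbr m powr s)) \<le> ereal (cmod (H x) * norm x powr s)"
        by simp
    qed simp
    hence "cmod (c m) * V8 * (48 powr (-\<bar>s\<bar>) * jbr m powr s) \<le> e" using e by simp
    hence "48 powr \<bar>s\<bar> * (cmod (c m) * V8 * (48 powr (-\<bar>s\<bar>) * jbr m powr s)) \<le> 48 powr \<bar>s\<bar> * e"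
      by (intro mult_left_mono) auto
    moreover have "48 powr \<bar>s\<bar> * (cmod (c m) * V8 * (48 powr (-\<bar>s\<bar>) * jbr m powr s)) = V8 * (cmod (c m) * jbr m powr s)"
      by (simp add: powr_minus field_simps)
    ultimately have "V8 * (cmod (c m) * jbr m powr s) \<le> 48 powr \<bar>s\<bar> * e" by simp
    thus ?thesis using V8 by (simp add: field_simps)
  qed
  have "lw_sup s c \<le> ereal (48 powr \<bar>s\<bar> / V8 * e)"
    unfolding lw_sup_def by (rule SUP_least) (use bnd in simp)
  moreover have "Lw_norm \<infinity> s H = e" using e by (simp add: Lw_norm_def)
  moreover have "0 \<le> 48 powr \<bar>s\<bar> / V8 * e" using V8 e by simp
  ultimately show ?thesis unfolding lw_norm_def
    by (cases "lw_sup s c") (auto simp: c_def H_def V8_def)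
qed



lemma lw_term_eq: "0 < real_of_ereal p \<Longrightarrow>
  lw_term p t a k = (cmod (a k) * jbr k powr t) powr real_of_ereal p"
  using jbr_pos[of k]
  by (simp add: lw_term_def powr_mult powr_powr mult.commute)

lemma real_pos_of_ge1: "1 \<le> (p::ereal) \<Longrightarrow> p \<noteq> \<infinity> \<Longrightarrow> 1 \<le> real_of_ereal p"
  by (cases p) auto

lemma G1:
  assumes p: "1 \<le> p" and a: "in_lw p t a"
  shows "cmod (a k) * jbr k powr t \<le> lw_norm p t a"
proof (cases "p = \<infinity>")
  case True
  have le: "ereal (cmod (a k) * jbr k powr t) \<le> lw_sup t a"
    unfolding lw_sup_def by (rule SUP_upper) simp
  have "lw_sup t a < \<infinity>" using a True by (simp add: in_lw_def)
  hence "cmod (a k) * jbr k powr t \<le> real_of_ereal (lw_sup t a)" using le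
    by (cases "lw_sup t a") auto
  thus ?thesis using True by (simp add: lw_norm_def)
next
  case False
  define pr where "pr = real_of_ereal p"
  have pr: "1 \<le> pr" using real_pos_of_ge1[OF p False] by (simp add: pr_def)
  have sm: "lw_term p t a summable_on UNIV" using a False by (simp add: in_lw_def)
  have "lw_term p t a k \<le> infsum (lw_term p t a) UNIV"
    using finite_sum_le_infsum[OF sm, of "{k}"] lw_term_nonneg by auto
  hence "(cmod (a k) * jbr k powr t) powr pr \<le> infsum (lw_term p t a) UNIV"
    using lw_term_eq[of p t a k] pr by (simp add: pr_def)
  hence "((cmod (a k) * jbr k powr t) powr pr) powr (1/pr) \<le> infsum (lw_term p t a) UNIV powr (1/pr)"
    using pr by (intro powr_mono2) auto
  moreover have "((cmod (a k) * jbr k powr t) powr pr) powr (1/pr) = cmod (a k) * jbr k powr t"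
    using pr by (simp add: powr_powr)
  ultimately show ?thesis using False by (simp add: lw_norm_def pr_def)
qed

lemma G2: "1 \<le> p \<Longrightarrow> in_lw p t a \<Longrightarrow> 0 \<le> lw_norm p t a"
  using G1[of p t a 0] by (meson jbr_pos mult_nonneg_nonneg norm_ge_zero order_trans powr_ge_zero)

lemma G3:
  assumes F: "finite F" and a0: "\<And>k. k \<notin> F \<Longrightarrow> a k = 0" and p: "1 \<le> p"
  shows "in_lw p t a"
proof (cases "p = \<infinity>")
  case True
  have "lw_sup t a \<le> ereal (\<Sum>k\<in>F. cmod (a k) * jbr k powr t)"
    unfolding lw_sup_def
  proof (rule SUP_least)
    fix k
    show "ereal (cmod (a k) * jbr k powr t) \<le> ereal (\<Sum>k\<in>F. cmod (a k) * jbr k powr t)"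
    proof (cases "k \<in> F")
      case True
      have "cmod (a k) * jbr k powr t \<le> (\<Sum>k\<in>F. cmod (a k) * jbr k powr t)"
        by (rule member_le_sum) (use True F in auto)
      thus ?thesis by simp
    next
      case False thus ?thesis using a0[OF False] by (simp add: sum_nonneg)
    qed
  qed
  hence "lw_sup t a < \<infinity>" using le_less_trans by fastforce
  thus ?thesis using True by (simp add: in_lw_def)
next
  case False
  have p0: "0 < real_of_ereal p" using real_pos_of_ge1[OF p False] by simp
  have "lw_term p t a summable_on F" using F by (rule summable_on_finite)
  hence "lw_term p t a summable_on UNIV"
    by (rule summable_on_cong_neutral[THEN iffD1, rotated -1]) (use a0 p0 in \<open>auto simp: lw_term_def\<close>)
  thus ?thesis using False by (simp add: in_lw_def)
qed

lemma G4:
  assumes F: "finite F" and a0: "\<And>k. k \<notin> F \<Longrightarrow> a k = 0" and p: "1 \<le> p" "p \<noteq> \<infinity>"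
  shows "lw_norm p t a = (\<Sum>k\<in>F. lw_term p t a k) powr (1 / real_of_ereal p)"
proof -
  have p0: "0 < real_of_ereal p" using real_pos_of_ge1[OF p] by simp
  have "infsum (lw_term p t a) UNIV = infsum (lw_term p t a) F"
    by (rule infsum_cong_neutral) (use a0 p0 in \<open>auto simp: lw_term_def\<close>)
  thus ?thesis using F p by (simp add: lw_norm_def)
qed

lemma G5:
  assumes p: "1 \<le> p" and a: "in_lw p t a" and b: "in_lw p t b"
    and le: "\<And>k. cmod (b k) \<le> cmod (a k)"
  shows "lw_norm p t b \<le> lw_norm p t a"
proof (cases "p = \<infinity>")
  case True
  have "lw_sup t b \<le> lw_sup t a"
    unfolding lw_sup_def
    by (rule SUP_mono') (use le in \<open>auto intro!: mult_right_mono\<close>)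
  moreover have "lw_sup t a < \<infinity>" using a True by (simp add: in_lw_def)
  moreover have "0 \<le> lw_sup t b" unfolding lw_sup_def
    by (rule order_trans[OF _ SUP_upper[of 0]]) auto
  ultimately show ?thesis using True unfolding lw_norm_def
    by (cases "lw_sup t b"; cases "lw_sup t a") auto
next
  case False
  define pr where "pr = real_of_ereal p"
  have pr: "1 \<le> pr" using real_pos_of_ge1[OF p False] by (simp add: pr_def)
  have "infsum (lw_term p t b) UNIV \<le> infsum (lw_term p t a) UNIV"
  proof (rule infsum_mono)
    show "lw_term p t b summable_on UNIV" using b False by (simp add: in_lw_def)
    show "lw_term p t a summable_on UNIV" using a False by (simp add: in_lw_def)
    fix k
    have "cmod (b k) powr pr \<le> cmod (a k) powr pr" using le pr by (intro powr_mono2) auto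
    thus "lw_term p t b k \<le> lw_term p t a k"
      unfolding lw_term_def pr_def[symmetric] by (intro mult_right_mono) auto
  qed
  hence "infsum (lw_term p t b) UNIV powr (1/pr) \<le> infsum (lw_term p t a) UNIV powr (1/pr)"
    using pr by (intro powr_mono2) (auto intro!: infsum_nonneg lw_term_nonneg)
  thus ?thesis using False by (simp add: lw_norm_def pr_def)
qed

definition Ufac :: "'n::finite itself \<Rightarrow> ereal \<Rightarrow> real \<Rightarrow> real" where
  "Ufac _ p t = (if p = \<infinity> then 48 powr \<bar>t\<bar>
     else (48 powr \<bar>real_of_ereal p * t\<bar> * bv TYPE('n) (1/4)) powr (1/real_of_ereal p))"

definition Lfac :: "'n::finite itself \<Rightarrow> ereal \<Rightarrow> real \<Rightarrow> real" where
  "Lfac _ q s = (if q = \<infinity> then 48 powr \<bar>s\<bar> / bv TYPE('n) (1/8)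
     else (1 / (bv TYPE('n) (1/8) powr real_of_ereal q * 48 powr (-\<bar>real_of_ereal q * s\<bar>) * bv TYPE('n) (1/8)))
           powr (1 / real_of_ereal q))"

lemma Ufac_nonneg: "0 \<le> Ufac TYPE('n::finite) p t" by (simp add: Ufac_def)
lemma Lfac_nonneg: "0 \<le> Lfac TYPE('n::finite) q s"
  using bv_pos[of "1/8", where 'n='n] by (simp add: Lfac_def)

lemma upper_gen:
  fixes a :: "int^'n::finite \<Rightarrow> complex"
  assumes F: "finite F" and a0: "\<And>k. k \<notin> F \<Longrightarrow> a k = 0" and p: "1 \<le> p"
  shows "in_Lw p t (bumpf a F) \<and> 0 \<le> Lw_norm p t (bumpf a F) \<and>
     Lw_norm p t (bumpf a F) \<le> Ufac TYPE('n) p t * lw_norm p t a"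
proof (cases "p = \<infinity>")
  case True
  have ia: "in_lw p t a" by (rule G3[OF F a0 p])
  have "in_Lw \<infinity> t (bumpf a F) \<and> 0 \<le> Lw_norm \<infinity> t (bumpf a F)
     \<and> Lw_norm \<infinity> t (bumpf a F) \<le> 48 powr \<bar>t\<bar> * lw_norm p t a"
    by (rule upper_inf[OF F G2[OF p ia]]) (rule G1[OF p ia])
  thus ?thesis using True by (simp add: Ufac_def)
next
  case False
  have u: "in_Lw p t (bumpf a F) \<and>
    Lw_norm p t (bumpf a F) \<le> (48 powr \<bar>real_of_ereal p * t\<bar> * bv TYPE('n) (1/4)) powr (1/real_of_ereal p)
        * (\<Sum>k\<in>F. lw_term p t a k) powr (1/real_of_ereal p)"
    by (rule upper_fin[OF F p False])
  moreover have "0 \<le> Lw_norm p t (bumpf a F)" using False by (simp add: Lw_norm_def)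
  ultimately show ?thesis using False G4[OF F a0 p False] by (simp add: Ufac_def)
qed

lemma lower_gen:
  fixes a b :: "int^'n::finite \<Rightarrow> complex"
  assumes F: "finite F" and a0: "\<And>k. k \<notin> F \<Longrightarrow> a k = 0"
    and b0: "\<And>k. k \<notin> F \<Longrightarrow> b k = 0"
    and q: "1 \<le> q" and inL: "in_Lw q s (convR (bumpf a F) (bumpf b F))"
  shows "lw_norm q s (convZ a b) \<le> Lfac TYPE('n) q s * Lw_norm q s (convR (bumpf a F) (bumpf b F))"
proof (cases "q = \<infinity>")
  case True thus ?thesis using lower_inf[OF F F a0 b0] inL by (simp add: Lfac_def)
next
  case False thus ?thesis using lower_fin[OF F F a0 b0 q False inL] by (simp add: Lfac_def)
qed

lemma fin_bound:
  assumes hyp: "convR_incl TYPE('n::finite) q1 s1 q2 s2 q s"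
    and q: "1 \<le> q" and q1: "1 \<le> q1" and q2: "1 \<le> q2"
  shows "\<exists>D\<ge>0. \<forall>(a::int^'n \<Rightarrow> complex) b F. finite F \<longrightarrow> (\<forall>k. k \<notin> F \<longrightarrow> a k = 0) \<longrightarrow>
     (\<forall>k. k \<notin> F \<longrightarrow> b k = 0) \<longrightarrow> lw_norm q s (convZ a b) \<le> D * lw_norm q1 s1 a * lw_norm q2 s2 b"
proof -
  obtain C where C: "\<And>(f::real^'n \<Rightarrow> complex) g. in_Lw q1 s1 f \<Longrightarrow> in_Lw q2 s2 g \<Longrightarrow>
       convR_defined f g \<and> in_Lw q s (convR f g) \<and>
       Lw_norm q s (convR f g) \<le> C * Lw_norm q1 s1 f * Lw_norm q2 s2 g"
    using hyp unfolding convR_incl_def by blast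
  define C' where "C' = max C 0"
  define D where "D = Lfac TYPE('n) q s * C' * Ufac TYPE('n) q1 s1 * Ufac TYPE('n) q2 s2"
  have D0: "D \<ge> 0" unfolding D_def C'_def
    using Lfac_nonneg Ufac_nonneg by (intro mult_nonneg_nonneg) auto
  show ?thesis
  proof (intro exI[of _ D] conjI D0 allI impI)
    fix a b :: "int^'n \<Rightarrow> complex" and F :: "(int^'n) set"
    assume F: "finite F" and a0': "\<forall>k. k \<notin> F \<longrightarrow> a k = 0" and b0': "\<forall>k. k \<notin> F \<longrightarrow> b k = 0"
    have a0: "\<And>k. k \<notin> F \<Longrightarrow> a k = 0" and b0: "\<And>k. k \<notin> F \<Longrightarrow> b k = 0" using a0' b0' by auto
    define f where "f = bumpf a F"
    define g where "g = bumpf b F"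
    have uf: "in_Lw q1 s1 f \<and> 0 \<le> Lw_norm q1 s1 f \<and> Lw_norm q1 s1 f \<le> Ufac TYPE('n) q1 s1 * lw_norm q1 s1 a"
      unfolding f_def by (rule upper_gen[OF F a0 q1])
    have ug: "in_Lw q2 s2 g \<and> 0 \<le> Lw_norm q2 s2 g \<and> Lw_norm q2 s2 g \<le> Ufac TYPE('n) q2 s2 * lw_norm q2 s2 b"
      unfolding g_def by (rule upper_gen[OF F b0 q2])
    note Cfg = C[of f g] uf ug
    have inH: "in_Lw q s (convR f g)" using Cfg by blast
    have "lw_norm q s (convZ a b) \<le> Lfac TYPE('n) q s * Lw_norm q s (convR f g)"
      using lower_gen[OF F a0 b0 q] inH by (simp add: f_def g_def)
    also have "\<dots> \<le> Lfac TYPE('n) q s * (C' * Lw_norm q1 s1 f * Lw_norm q2 s2 g)"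
    proof (rule mult_left_mono[OF _ Lfac_nonneg])
      have "Lw_norm q s (convR f g) \<le> C * Lw_norm q1 s1 f * Lw_norm q2 s2 g" using Cfg by blast
      also have "\<dots> \<le> C' * Lw_norm q1 s1 f * Lw_norm q2 s2 g"
        unfolding C'_def using uf ug by (intro mult_right_mono) auto
      finally show "Lw_norm q s (convR f g) \<le> C' * Lw_norm q1 s1 f * Lw_norm q2 s2 g" .
    qed
    also have "\<dots> \<le> Lfac TYPE('n) q s * (C' * (Ufac TYPE('n) q1 s1 * lw_norm q1 s1 a) * (Ufac TYPE('n) q2 s2 * lw_norm q2 s2 b))"
      using uf ug Lfac_nonneg[of q s] Ufac_nonneg
      by (intro mult_left_mono mult_mono) (auto simp: C'_def)
    also have "\<dots> = D * lw_norm q1 s1 a * lw_norm q2 s2 b" by (simp add: D_def mult_ac)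
    finally show "lw_norm q s (convZ a b) \<le> D * lw_norm q1 s1 a * lw_norm q2 s2 b" .
  qed
qed



definition Hb :: "nat \<Rightarrow> (int^'n::finite) set" where
  "Hb N = {k. \<forall>i. \<bar>k$i\<bar> \<le> int N}"

lemma Hb_finite: "finite (Hb N :: (int^'n::finite) set)"
proof -
  have inj: "inj (vec_nth :: int^'n \<Rightarrow> 'n \<Rightarrow> int)" by (simp add: inj_def vec_eq_iff)
  have fin: "finite (PiE (UNIV::'n set) (\<lambda>_. {- int N..int N}))" by (intro finite_PiE) auto
  have "Hb N \<subseteq> vec_nth -` (PiE (UNIV::'n set) (\<lambda>_. {- int N..int N}))"
    by (auto simp: Hb_def PiE_iff abs_le_iff) (metis minus_le_iff)
  moreover have "finite (vec_nth -` (PiE (UNIV::'n set) (\<lambda>_. {- int N..int N})))"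
    by (rule finite_vimageI[OF fin inj])
  ultimately show ?thesis by (rule finite_subset)
qed

lemma Hb_eventually:
  assumes X: "finite (X :: (int^'n::finite) set)"
  shows "\<exists>N0. \<forall>N\<ge>N0. X \<subseteq> Hb N"
proof -
  define N0 where "N0 = nat (\<Sum>k\<in>X. \<Sum>i\<in>UNIV. \<bar>k$i\<bar>)"
  have "\<bar>k$i\<bar> \<le> int N0" if "k \<in> X" for k i
  proof -
    have "\<bar>k$i\<bar> \<le> (\<Sum>i\<in>UNIV. \<bar>k$i\<bar>)" by (rule member_le_sum) auto
    also have "\<dots> \<le> (\<Sum>k\<in>X. \<Sum>i\<in>UNIV. \<bar>k$i\<bar>)"
      by (rule member_le_sum[of k X "\<lambda>k. \<Sum>i\<in>UNIV. \<bar>k$i\<bar>"]) (use that X in \<open>auto intro: sum_nonneg\<close>)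
    also have "\<dots> \<le> int N0" by (simp add: N0_def)
    finally show ?thesis .
  qed
  hence "\<forall>N\<ge>N0. X \<subseteq> Hb N"
    by (auto simp: Hb_def) (meson of_nat_le_iff order_trans)
  thus ?thesis by blast
qed

definition Kb :: "nat \<Rightarrow> int^'n::finite \<Rightarrow> (int^'n) set" where
  "Kb N m = {j \<in> Hb N. m - j \<in> Hb N}"

lemma Kb_finite: "finite (Kb N m)"
  unfolding Kb_def by (rule finite_subset[OF _ Hb_finite[of N]]) auto

lemma Kb_eventually:
  assumes X: "finite X"
  shows "\<exists>N0. \<forall>N\<ge>N0. X \<subseteq> Kb N m"
proof -
  obtain N0 where "\<forall>N\<ge>N0. X \<union> (\<lambda>j. m - j) ` X \<subseteq> Hb N"
    using Hb_eventually[of "X \<union> (\<lambda>j. m - j) ` X"] X by auto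
  thus ?thesis by (intro exI[of _ N0]) (auto simp: Kb_def)
qed

lemma Kb_lim:
  assumes "(f has_sum T) UNIV"
  shows "(\<lambda>N. sum f (Kb N m)) \<longlonglongrightarrow> T"
proof -
  have lim: "(sum f \<longlongrightarrow> T) (finite_subsets_at_top UNIV)" using assms by (simp add: has_sum_def)
  have fl: "filterlim (\<lambda>N. Kb N m) (finite_subsets_at_top UNIV) sequentially"
    unfolding filterlim_finite_subsets_at_top
  proof (intro allI impI)
    fix X :: "(int^'a) set" assume "finite X \<and> X \<subseteq> UNIV"
    then obtain N0 where "\<forall>N\<ge>N0. X \<subseteq> Kb N m" using Kb_eventually by blast
    thus "\<forall>\<^sub>F N in sequentially. finite (Kb N m) \<and> X \<subseteq> Kb N m \<and> Kb N m \<subseteq> UNIV"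
      by (auto simp: eventually_sequentially Kb_finite)
  qed
  show ?thesis using filterlim_compose[OF lim fl] by simp
qed

definition trn :: "(int^'n::finite \<Rightarrow> complex) \<Rightarrow> nat \<Rightarrow> int^'n \<Rightarrow> complex" where
  "trn a N k = (if k \<in> Hb N then complex_of_real (cmod (a k)) else 0)"

lemma convZ_trn:
  "convZ (trn a N) (trn b N) m = complex_of_real (\<Sum>j\<in>Kb N m. cmod (a (m - j)) * cmod (b j))"
proof -
  have "convZ (trn a N) (trn b N) m = (\<Sum>j\<in>Hb N. trn a N (m - j) * trn b N j)"
    by (rule cZ_convZ(2)[OF Hb_finite Hb_finite]) (auto simp: trn_def)
  also have "\<dots> = (\<Sum>j\<in>Hb N. complex_of_real (if m - j \<in> Hb N then cmod (a (m - j)) * cmod (b j) else 0))"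
    by (intro sum.cong refl) (auto simp: trn_def)
  also have "\<dots> = complex_of_real (\<Sum>j\<in>Hb N. if m - j \<in> Hb N then cmod (a (m - j)) * cmod (b j) else 0)"
    by simp
  also have "(\<Sum>j\<in>Hb N. if m - j \<in> Hb N then cmod (a (m - j)) * cmod (b j) else 0) =
      (\<Sum>j\<in>Kb N m. cmod (a (m - j)) * cmod (b j))"
    unfolding Kb_def by (rule sum.inter_filter[OF Hb_finite, symmetric])
  finally show ?thesis .
qed

lemma G6:
  assumes p: "1 \<le> p" "p \<noteq> \<infinity>" and c: "in_lw p t c" and M: "finite M"
  shows "(\<Sum>m\<in>M. lw_term p t c m) \<le> lw_norm p t c powr real_of_ereal p"
proof -
  have pr: "1 \<le> real_of_ereal p" using real_pos_of_ge1[OF p] .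
  have sm: "lw_term p t c summable_on UNIV" using c p by (simp add: in_lw_def)
  have "(\<Sum>m\<in>M. lw_term p t c m) \<le> infsum (lw_term p t c) UNIV"
    using finite_sum_le_infsum[OF sm M] lw_term_nonneg by auto
  also have "\<dots> = lw_norm p t c powr real_of_ereal p"
    using p pr by (simp add: lw_norm_def powr_powr infsum_nonneg lw_term_nonneg)
  finally show ?thesis .
qed



lemma trz: "k \<notin> Hb N \<Longrightarrow> trn c N k = 0"
  by (simp add: trn_def)

lemma trle: "cmod (trn c N k) \<le> cmod (c k)"
  by (simp add: trn_def)

theorem proposition3p2:
  fixes q q1 q2 :: ereal and s s1 s2 :: real
  assumes "1 \<le> q" and "1 \<le> q1" and "1 \<le> q2"
    and "convR_incl TYPE('n::finite) q1 s1 q2 s2 q s"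
  shows "convZ_incl TYPE('n) q1 s1 q2 s2 q s"
proof -
  note q = assms(1) and q1 = assms(2) and q2 = assms(3)
  obtain D where D0: "D \<ge> 0" and Dprop: "\<forall>(a::int^'n \<Rightarrow> complex) b F. finite F \<longrightarrow> (\<forall>k. k \<notin> F \<longrightarrow> a k = 0) \<longrightarrow>
     (\<forall>k. k \<notin> F \<longrightarrow> b k = 0) \<longrightarrow> lw_norm q s (convZ a b) \<le> D * lw_norm q1 s1 a * lw_norm q2 s2 b"
    using fin_bound[OF assms(4,1,2,3)] by blast
  show ?thesis unfolding convZ_incl_def
  proof (intro exI[of _ D] allI impI)
    fix a b :: "int^'n \<Rightarrow> complex"
    assume ia: "in_lw q1 s1 a" and ib: "in_lw q2 s2 b"
    define Na where "Na = lw_norm q1 s1 a"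
    define Nb where "Nb = lw_norm q2 s2 b"
    define R where "R = D * Na * Nb"
    have Na0: "0 \<le> Na" unfolding Na_def by (rule G2[OF q1 ia])
    have Nb0: "0 \<le> Nb" unfolding Nb_def by (rule G2[OF q2 ib])
    have R0: "0 \<le> R" using D0 Na0 Nb0 by (simp add: R_def)
    define f where "f m j = cmod (a (m - j)) * cmod (b j)" for m j
    define S where "S N m = (\<Sum>j\<in>Kb N m. f m j)" for N m
    have f0: "0 \<le> f m j" for m j by (simp add: f_def)
    have iA: "in_lw q1 s1 (trn a N)" for N by (rule G3[OF Hb_finite _ q1]) (rule trz)
    have iB: "in_lw q2 s2 (trn b N)" for N by (rule G3[OF Hb_finite _ q2]) (rule trz)
    have ta: "lw_norm q1 s1 (trn a N) \<le> Na" for N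
      unfolding Na_def by (rule G5[OF q1 ia iA]) (rule trle)
    have tb: "lw_norm q2 s2 (trn b N) \<le> Nb" for N
      unfolding Nb_def by (rule G5[OF q2 ib iB]) (rule trle)
    have cN: "lw_norm q s (convZ (trn a N) (trn b N)) \<le> R" for N
    proof -
      have "lw_norm q s (convZ (trn a N) (trn b N)) \<le> D * lw_norm q1 s1 (trn a N) * lw_norm q2 s2 (trn b N)"
        using Dprop Hb_finite[of N] trz[where c=a and N=N] trz[where c=b and N=N] by blast
      also have "\<dots> \<le> D * Na * Nb"
        using ta[of N] tb[of N] D0 Na0 Nb0 G2[OF q1 iA[of N]] G2[OF q2 iB[of N]]
        by (intro mult_mono mult_left_mono) (auto intro: mult_nonneg_nonneg)
      finally show ?thesis by (simp add: R_def)
    qed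
    have cin: "in_lw q s (convZ (trn a N) (trn b N))" for N
    proof (rule G3[OF _ _ q])
      show "finite ((\<lambda>(k,j). k + j) ` (Hb N \<times> Hb N))"
        by (intro finite_imageI finite_cartesian_product Hb_finite)
      show "\<And>m. m \<notin> (\<lambda>(k,j). k + j) ` (Hb N \<times> Hb N) \<Longrightarrow> convZ (trn a N) (trn b N) m = 0"
        by (rule convZ_zero_outside[OF Hb_finite Hb_finite trz[where c=a and N=N] trz[where c=b and N=N]])
    qed
    have cmS: "cmod (convZ (trn a N) (trn b N) m) = S N m" for N m
      unfolding convZ_trn S_def f_def norm_of_real by (rule abs_of_nonneg, rule sum_nonneg) auto
    have S0: "0 \<le> S N m" for N m unfolding S_def by (simp add: sum_nonneg f0)
    have jp: "0 < jbr m powr s" for m using jbr_pos[of m] by simp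
    have Sbd: "S N m * jbr m powr s \<le> R" for N m
      using G1[OF q cin, of N m] cN[of N] cmS by simp
    have fsum: "sum (f m) J \<le> R / jbr m powr s" if J: "finite J" for m J
    proof -
      obtain N0 where "\<forall>N\<ge>N0. J \<subseteq> Kb N m" using Kb_eventually[OF J] by blast
      hence sub: "J \<subseteq> Kb N0 m" by blast
      have "sum (f m) J \<le> S N0 m" unfolding S_def
        by (rule sum_mono2[OF Kb_finite sub]) (simp add: f0)
      also have "\<dots> \<le> R / jbr m powr s" using Sbd[of N0 m] jp[of m] by (simp add: field_simps)
      finally show ?thesis .
    qed
    have summ: "f m summable_on UNIV" for m
    proof (rule nonneg_bdd_above_summable_on)
      show "bdd_above (sum (f m) ` {F. F \<subseteq> UNIV \<and> finite F})"
        by (rule bdd_aboveI[of _ "R / jbr m powr s"]) (auto intro: fsum)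
    qed (simp add: f0)
    define T where "T m = infsum (f m) UNIV" for m
    have Tle: "T m \<le> R / jbr m powr s" for m
      unfolding T_def by (rule infsum_le_finite_sums[OF summ]) (rule fsum)
    have Tbd: "T m * jbr m powr s \<le> R" for m using Tle[of m] jp[of m] by (simp add: field_simps)
    have T0: "0 \<le> T m" for m unfolding T_def by (rule infsum_nonneg) (simp add: f0)
    have abss: "(\<lambda>j. norm (a (m - j) * b j)) summable_on UNIV" for m
      using summ[of m] by (simp add: f_def[abs_def] norm_mult)
    have cle: "cmod (convZ a b m) \<le> T m" for m
      unfolding convZ_def T_def using norm_infsum_bound[OF abss[of m]] by (simp add: f_def[abs_def] norm_mult)
    have defd: "convZ_defined a b" unfolding convZ_defined_def
      using abss by (blast intro: abs_summable_summable)
    have cT: "cmod (convZ a b m) * jbr m powr s \<le> T m * jbr m powr s" for m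
      using cle[of m] jp[of m] by (simp add: mult_right_mono)
    show "convZ_defined a b \<and> in_lw q s (convZ a b) \<and>
        lw_norm q s (convZ a b) \<le> D * lw_norm q1 s1 a * lw_norm q2 s2 b"
    proof (cases "q = \<infinity>")
      case True
      have "lw_sup s (convZ a b) \<le> ereal R"
        unfolding lw_sup_def by (rule SUP_least) (use cT Tbd order_trans in \<open>fastforce\<close>)
      hence "lw_sup s (convZ a b) < \<infinity>" "lw_norm q s (convZ a b) \<le> R"
        using True R0 by (cases "lw_sup s (convZ a b)"; simp add: lw_norm_def)+
      thus ?thesis using True defd by (simp add: in_lw_def R_def Na_def Nb_def)
    next
      case False
      define qr where "qr = real_of_ereal q"
      have qr: "1 \<le> qr" using real_pos_of_ge1[OF q False] by (simp add: qr_def)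
      have limS: "(\<lambda>N. S N m) \<longlonglongrightarrow> T m" for m
        unfolding S_def T_def by (rule Kb_lim[OF has_sum_infsum[OF summ]])
      have Tsum: "(\<Sum>m\<in>M. (T m * jbr m powr s) powr qr) \<le> R powr qr" if M: "finite M" for M
      proof (rule LIMSEQ_le_const2)
        show "(\<lambda>N. \<Sum>m\<in>M. (S N m * jbr m powr s) powr qr) \<longlonglongrightarrow> (\<Sum>m\<in>M. (T m * jbr m powr s) powr qr)"
        proof (intro tendsto_sum tendsto_powr' tendsto_mult_right limS tendsto_const)
          fix m show "T m * jbr m powr s \<noteq> 0 \<or> 0 < qr \<and> (\<forall>\<^sub>F N in sequentially. 0 \<le> S N m * jbr m powr s)"
            using qr S0 jp by (auto intro: always_eventually less_imp_le)
        qed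
        show "\<exists>N0. \<forall>N\<ge>N0. (\<Sum>m\<in>M. (S N m * jbr m powr s) powr qr) \<le> R powr qr"
        proof (intro exI allI impI)
          fix N
          have "(\<Sum>m\<in>M. (S N m * jbr m powr s) powr qr) = (\<Sum>m\<in>M. lw_term q s (convZ (trn a N) (trn b N)) m)"
            using qr by (intro sum.cong refl) (simp add: lw_term_eq cmS qr_def)
          also have "\<dots> \<le> lw_norm q s (convZ (trn a N) (trn b N)) powr qr"
            unfolding qr_def by (rule G6[OF q False cin M])
          also have "\<dots> \<le> R powr qr"
            using cN[of N] G2[OF q cin] qr by (intro powr_mono2) auto
          finally show "(\<Sum>m\<in>M. (S N m * jbr m powr s) powr qr) \<le> R powr qr" .
        qed
      qed
      have lt: "lw_term q s (convZ a b) m \<le> (T m * jbr m powr s) powr qr" for m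
      proof -
        have "lw_term q s (convZ a b) m = (cmod (convZ a b m) * jbr m powr s) powr qr"
          using qr by (simp add: lw_term_eq qr_def)
        also have "\<dots> \<le> (T m * jbr m powr s) powr qr"
          using cT[of m] qr jp[of m] by (intro powr_mono2) auto
        finally show ?thesis .
      qed
      have ls: "(\<Sum>m\<in>M. lw_term q s (convZ a b) m) \<le> R powr qr" if "finite M" for M
        using sum_mono[of M "lw_term q s (convZ a b)", OF lt] Tsum[OF that] by linarith
      have sm: "lw_term q s (convZ a b) summable_on UNIV"
      proof (rule nonneg_bdd_above_summable_on)
        show "bdd_above (sum (lw_term q s (convZ a b)) ` {F. F \<subseteq> UNIV \<and> finite F})"
          by (rule bdd_aboveI[of _ "R powr qr"]) (auto intro: ls)
      qed (simp add: lw_term_nonneg)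
      have inf: "infsum (lw_term q s (convZ a b)) UNIV \<le> R powr qr"
        by (rule infsum_le_finite_sums[OF sm]) (rule ls)
      have "lw_norm q s (convZ a b) = infsum (lw_term q s (convZ a b)) UNIV powr (1/qr)"
        using False by (simp add: lw_norm_def qr_def)
      also have "\<dots> \<le> (R powr qr) powr (1/qr)"
        using inf qr by (intro powr_mono2) (auto intro!: infsum_nonneg lw_term_nonneg)
      also have "\<dots> = R" using qr R0 by (simp add: powr_powr)
      finally show ?thesis using False defd sm by (simp add: in_lw_def R_def Na_def Nb_def)
    qed
  qed
qed


end
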